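(* Let $c$ be a positive measurable function on $(T,+\infty)$ such that $c(t)e^{-t}$ is decreasing on $(T,+\infty)$ and $\int_{T_1}^{+\infty}c(t)e^{-t}dt<+\infty$ for some $T_1>T$. Then there is a positive measurable function $\tilde c$ on $(T,+\infty)$ such that (1) $\tilde c\ge c$ on $(T,+\infty)$; (2) $\tilde c(t)e^{-t}$ is strictly decreasing on $(T,+\infty)$ and $\tilde c$ is increasing on $(a,+\infty)$ for some real number $a>T$; (3) $\int_{T_1}^{+\infty}\tilde c(t)e^{-t}dt<+\infty$. Moreover, if $\int_T^{+\infty}c(t)e^{-t}dt<+\infty$ and $c\in\mathcal{P}_T$, then $\tilde c$ can be chosen to satisfy (1)–(3) and in addition $\int_T^{+\infty}\tilde c(t)e^{-t}dt<+\infty$ and $\tilde c\in\mathcal{P}_T$.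
   Context: For the "moreover" part: $M$ is a complex manifold, $\psi$ is plurisubharmonic on $M$ with $T=-\sup_M\psi$, and $\varphi$ is Lebesgue measurable with $\varphi+\psi$ plurisubharmonic. $\mathcal{P}_T$ is the class of positive measurable functions $c$ on $(T,+\infty)$ such that $c(t)e^{-t}$ is decreasing and there is a closed subset $E\subset M$ with $E\subset\{z\in Z:\psi(z)=-\infty\}$ for some analytic subset $Z$ of $M$, such that $e^{-\varphi}c(-\psi)$ has a positive lower bound on every compact subset of $M\setminus E$. *)

theory Defs
  imports "HOL-Analysis.Analysis"
begin

definition pos_meas_on :: "real \<Rightarrow> (real \<Rightarrow> real) \<Rightarrow> bool" where
  "pos_meas_on T c \<longleftrightarrow> (\<forall>t>T. 0 < c t) \<and> set_borel_measurable lborel {T<..} c"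

definition ce_decr :: "real \<Rightarrow> (real \<Rightarrow> real) \<Rightarrow> bool" where
  "ce_decr T c \<longleftrightarrow> (\<forall>s t. T < s \<and> s \<le> t \<longrightarrow> c t * exp (- t) \<le> c s * exp (- s))"

definition ce_strict_decr :: "real \<Rightarrow> (real \<Rightarrow> real) \<Rightarrow> bool" where
  "ce_strict_decr T c \<longleftrightarrow> (\<forall>s t. T < s \<and> s < t \<longrightarrow> c t * exp (- t) < c s * exp (- s))"

definition ce_int_finite :: "real \<Rightarrow> (real \<Rightarrow> real) \<Rightarrow> bool" where
  "ce_int_finite A c \<longleftrightarrow> (\<integral>\<^sup>+ t \<in> {A<..}. ennreal (c t * exp (- t)) \<partial>lborel) < \<infinity>"

text \<open>The class P_T, relative to an (abstract) space M (the carrier type 'a), a family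
  Analytic of subsets playing the role of the analytic subsets of M, and the functions
  psi (with values in [-infinity, +infinity)) and phi.  The lower bound of
  e^{-phi} c(-psi) is required at those points where -psi lies in the domain (T,+infinity)
  of c.\<close>
definition in_PT :: "'a::topological_space set set \<Rightarrow> ('a \<Rightarrow> ereal) \<Rightarrow> ('a \<Rightarrow> real) \<Rightarrow> real
    \<Rightarrow> (real \<Rightarrow> real) \<Rightarrow> bool" where
  "in_PT Analytic psi phi T c \<longleftrightarrow>
     pos_meas_on T c \<and> ce_decr T c \<and>
     (\<exists>E Z. closed E \<and> Z \<in> Analytic \<and> E \<subseteq> {z \<in> Z. psi z = - \<infinity>} \<and>
        (\<forall>K. compact K \<and> K \<subseteq> UNIV - E \<longrightarrow>
           (\<exists>b>0. \<forall>z\<in>K. ereal T < - psi z \<and> - psi z < \<infinity> \<longrightarrow>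
                b \<le> exp (- phi z) * c (real_of_ereal (- psi z)))))"

end

theory Submission
  imports Defs
begin
lemma exp_fin:
  fixes a k :: real assumes "a > 0"
  shows "(\<integral>\<^sup>+x. ennreal (exp (-a*x)) * indicator {k<..} x \<partial>lborel) < \<infinity>"
proof -
  have "(\<integral>\<^sup>+x. ennreal (exp (-a*x)) * indicator {k<..} x \<partial>lborel)
      \<le> (\<integral>\<^sup>+x. ennreal (indicator {k..} x * exp (-a*x)) \<partial>lborel)"
    by (intro nn_integral_mono) (auto simp: indicator_def)
  also have "\<dots> = ennreal (exp (-a*k)/a)"
    by (rule nn_integral_has_integral_lebesgue) (use has_integral_exp_minus_to_infinity[OF assms] in auto)
  finally show ?thesis by (simp add: order_le_less_trans)
qed

lemma constr:
  fixes T T1 :: real and c :: "real \<Rightarrow> real"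
  assumes pm: "pos_meas_on T c" and dec: "ce_decr T c" and T1: "T1 > T"
  assumes M_def: "M = (\<lambda>t. Sup (c ` {T1<..t}))"
  assumes G_def: "G = (\<lambda>t. if t \<le> T1 then c t else M t)"
  shows "\<forall>t>T. c t \<le> G t"
    and "\<forall>t>T. 0 < G t"
    and "\<forall>s t. T1 < s \<and> s \<le> t \<longrightarrow> G s \<le> G t"
    and "\<forall>s t. T < s \<and> s \<le> t \<longrightarrow> G t * exp (-t) \<le> G s * exp (-s)"
    and "\<forall>t>T1. M t * exp (-t) \<le> c ((t+T1)/2) * exp (-((t+T1)/2)) + c T1 * exp (-T1) * exp (T1/2) * exp (-(1/2)*t)"
    and "mono (\<lambda>t. if t \<le> T1 then 0 else M t)"
proof -
  have cpos: "\<And>t. t > T \<Longrightarrow> 0 < c t" using pm unfolding pos_meas_on_def by auto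
  have hdec: "\<And>s t. T < s \<Longrightarrow> s \<le> t \<Longrightarrow> c t * exp (-t) \<le> c s * exp (-s)"
    using dec unfolding ce_decr_def by auto
  have cbd: "c s \<le> c T1 * exp (-T1) * exp t" if "T1 < s" "s \<le> t" for s t
  proof -
    have "c s * exp (-s) \<le> c T1 * exp (-T1)" using hdec[of T1 s] that T1 by auto
    hence "c s \<le> c T1 * exp (-T1) * exp s" by (simp add: exp_minus field_simps)
    also have "\<dots> \<le> c T1 * exp (-T1) * exp t" using that cpos[of T1] T1 by (intro mult_left_mono) auto
    finally show ?thesis .
  qed
  have bdd: "bdd_above (c ` {T1<..t})" for t
    using cbd[of _ t] unfolding bdd_above_def by (intro exI[of _ "c T1 * exp (-T1) * exp t"]) auto
  have cM: "c t \<le> M t" if "t > T1" for t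
    unfolding M_def using that by (intro cSup_upper bdd) auto
  have Mmono: "M s \<le> M t" if "T1 < s" "s \<le> t" for s t
    unfolding M_def using that by (intro cSup_subset_mono bdd) auto
  have Mpos: "M t > 0" if "t > T1" for t using cM[OF that] cpos[of t] that T1 by auto
  show 1: "\<forall>t>T. c t \<le> G t" using cM unfolding G_def by auto
  show "\<forall>t>T. 0 < G t" using 1 cpos by (auto intro: less_le_trans)
  show "\<forall>s t. T1 < s \<and> s \<le> t \<longrightarrow> G s \<le> G t" using Mmono unfolding G_def by auto
  show "mono (\<lambda>t. if t \<le> T1 then 0 else M t)"
    unfolding mono_def using Mmono Mpos by (auto simp: less_imp_le)
  show "\<forall>s t. T < s \<and> s \<le> t \<longrightarrow> G t * exp (-t) \<le> G s * exp (-s)"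
  proof (intro allI impI)
    fix t t' assume tt: "T < t \<and> t \<le> t'"
    have Gt: "c s * exp (-s) \<le> G t * exp (-t)" if "t \<le> s" for s
    proof (cases "t \<le> T1")
      case True thus ?thesis using hdec[of t s] tt that unfolding G_def by auto
    next
      case False
      have "c s * exp (-s) \<le> c t * exp (-t)" using hdec[of t s] tt that by auto
      also have "\<dots> \<le> M t * exp (-t)" using cM[of t] False by auto
      finally show ?thesis using False unfolding G_def by auto
    qed
    show "G t' * exp (-t') \<le> G t * exp (-t)"
    proof (cases "t' \<le> T1")
      case True thus ?thesis using Gt[of t'] tt unfolding G_def by auto
    next
      case False
      have Gtnn: "0 \<le> G t" using 1 cpos tt by (meson less_le_trans less_imp_le)
      have "M t' \<le> G t * exp (-t) * exp t'"
        unfolding M_def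
      proof (rule cSup_least)
        show "c ` {T1<..t'} \<noteq> {}" using False by auto
      next
        fix y assume "y \<in> c ` {T1<..t'}"
        then obtain s where s: "T1 < s" "s \<le> t'" "y = c s" by auto
        show "y \<le> G t * exp (-t) * exp t'"
        proof (cases "s \<le> t")
          case True
          hence "t > T1" using s by auto
          hence "G t = M t" unfolding G_def by auto
          have "c s \<le> M t" using Mmono[of s t] cM[of s] s True by auto
          also have "\<dots> \<le> M t * exp (t' - t)" using Mpos[OF \<open>t > T1\<close>] tt
            by (intro mult_le_cancel_left1[THEN iffD2] disjI1 conjI) (auto simp: less_imp_le)
          finally show ?thesis using \<open>G t = M t\<close> s by (simp add: exp_diff exp_minus field_simps)
        next
          case False
          have "c s * exp (-s) \<le> G t * exp (-t)" using Gt[of s] False by auto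
          hence "c s \<le> G t * exp (-t) * exp s" by (simp add: exp_minus field_simps)
          also have "\<dots> \<le> G t * exp (-t) * exp t'" using s Gtnn by (intro mult_left_mono) auto
          finally show ?thesis using s by simp
        qed
      qed
      thus ?thesis using False unfolding G_def by (simp add: exp_minus field_simps)
    qed
  qed
  show "\<forall>t>T1. M t * exp (-t) \<le> c ((t+T1)/2) * exp (-((t+T1)/2)) + c T1 * exp (-T1) * exp (T1/2) * exp (-(1/2)*t)"
  proof (intro allI impI)
    fix t assume t: "t > T1"
    let ?B = "c ((t+T1)/2) * exp (-((t+T1)/2)) + c T1 * exp (-T1) * exp (T1/2) * exp (-(1/2)*t)"
    have B1: "0 \<le> c ((t+T1)/2) * exp (-((t+T1)/2))" using cpos[of "(t+T1)/2"] t T1 by auto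
    have B2: "0 \<le> c T1 * exp (-T1) * exp (T1/2) * exp (-(1/2)*t)" using cpos[of T1] T1 by auto
    have "M t \<le> ?B * exp t"
      unfolding M_def
    proof (rule cSup_least)
      show "c ` {T1<..t} \<noteq> {}" using t by auto
    next
      fix y assume "y \<in> c ` {T1<..t}"
      then obtain s where s: "T1 < s" "s \<le> t" "y = c s" by auto
      have "c s * exp (-t) \<le> ?B"
      proof (cases "s \<ge> (t+T1)/2")
        case True
        have "c s * exp (-t) \<le> c s * exp (-s)" using cpos[of s] s T1 by auto
        also have "\<dots> \<le> c ((t+T1)/2) * exp (-((t+T1)/2))" using hdec[of "(t+T1)/2" s] True t T1 by auto
        finally show ?thesis using B2 by linarith
      next
        case False
        have "c s * exp (-t) = (c s * exp (-s)) * exp (s - t)" by (simp add: exp_diff exp_minus field_simps)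
        also have "\<dots> \<le> (c T1 * exp (-T1)) * exp ((T1 - t)/2)"
        proof (rule mult_mono)
          show "c s * exp (-s) \<le> c T1 * exp (-T1)" using hdec[of T1 s] s T1 by auto
          show "exp (s - t) \<le> exp ((T1 - t)/2)" using False by simp
          show "0 \<le> c T1 * exp (-T1)" using cpos[of T1] T1 by auto
        qed simp
        also have "\<dots> = c T1 * exp (-T1) * exp (T1/2) * exp (-(1/2)*t)"
          by (simp add: exp_add[symmetric] diff_divide_distrib)
        finally show ?thesis using B1 by linarith
      qed
      thus "y \<le> ?B * exp t" using s by (simp add: exp_minus field_simps)
    qed
    thus "M t * exp (-t) \<le> ?B" by (simp add: exp_minus field_simps)
  qed
qed
theorem lemma2p10:
  fixes T T1 :: real and c :: "real \<Rightarrow> real"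
  assumes "pos_meas_on T c" and "ce_decr T c" and "T1 > T" and "ce_int_finite T1 c"
  shows "(\<exists>c'. pos_meas_on T c' \<and> (\<forall>t>T. c t \<le> c' t) \<and> ce_strict_decr T c' \<and>
            (\<exists>a>T. \<forall>s t. a < s \<and> s \<le> t \<longrightarrow> c' s \<le> c' t) \<and> ce_int_finite T1 c')
       \<and> (\<forall>(Analytic :: 'a::topological_space set set) psi phi.
            ereal T = - (SUP z. psi z) \<and> ce_int_finite T c \<and> in_PT Analytic psi phi T c \<longrightarrow>
            (\<exists>c'. pos_meas_on T c' \<and> (\<forall>t>T. c t \<le> c' t) \<and> ce_strict_decr T c' \<and>
              (\<exists>a>T. \<forall>s t. a < s \<and> s \<le> t \<longrightarrow> c' s \<le> c' t) \<and> ce_int_finite T1 c' \<and>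
              ce_int_finite T c' \<and> in_PT Analytic psi phi T c'))"
proof -
  note pm = assms(1) and dec = assms(2) and T1 = assms(3) and fin1 = assms(4)
  define M where "M \<equiv> \<lambda>t. Sup (c ` {T1<..t})"
  define G where "G \<equiv> \<lambda>t. if t \<le> T1 then c t else M t"
  define MM where "MM \<equiv> \<lambda>t. if t \<le> T1 then 0 else M t"
  define c' where "c' \<equiv> \<lambda>t. G t + 1"
  define K where "K \<equiv> c T1 * exp (-T1) * exp (T1/2)"
  note C = constr[OF pm dec T1 M_def[THEN meta_eq_to_obj_eq] G_def[THEN meta_eq_to_obj_eq]]
  have cpos: "\<And>t. t > T \<Longrightarrow> 0 < c t" using pm unfolding pos_meas_on_def by auto
  have Kpos: "K \<ge> 0" unfolding K_def using cpos[of T1] T1 by auto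
  have C0m[measurable]: "(\<lambda>x. indicator {T<..} x *\<^sub>R c x) \<in> borel_measurable borel"
    using pm unfolding pos_meas_on_def set_borel_measurable_def by simp
  have MMm[measurable]: "MM \<in> borel_measurable borel"
    using C(6) unfolding MM_def M_def by (rule borel_measurable_mono)
  have cc': "\<forall>t>T. c t \<le> c' t" using C(1) unfolding c'_def by force
  have pos': "pos_meas_on T c'"
    unfolding pos_meas_on_def set_borel_measurable_def
  proof
    show "\<forall>t>T. 0 < c' t" using C(2) unfolding c'_def by force
    have "(\<lambda>x. indicator {T<..} x *\<^sub>R c' x) = (\<lambda>x. indicator {T<..} x *\<^sub>R c x * indicator {..T1} x + MM x + indicator {T<..} x)"
      using T1 unfolding c'_def G_def MM_def by (auto simp: indicator_def fun_eq_iff)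
    also have "\<dots> \<in> borel_measurable lborel" by measurable
    finally show "(\<lambda>x. indicator {T<..} x *\<^sub>R c' x) \<in> borel_measurable lborel" .
  qed
  have sd': "ce_strict_decr T c'"
    unfolding ce_strict_decr_def
  proof (intro allI impI)
    fix s t assume st: "T < s \<and> s < t"
    have "G t * exp (-t) \<le> G s * exp (-s)" using C(4) st by auto
    moreover have "exp (-t) < exp (-s)" using st by simp
    ultimately have "G t * exp (-t) + exp (-t) < G s * exp (-s) + exp (-s)" by linarith
    thus "c' t * exp (- t) < c' s * exp (- s)" unfolding c'_def by (simp add: distrib_right)
  qed
  have inc': "\<exists>a>T. \<forall>s t. a < s \<and> s \<le> t \<longrightarrow> c' s \<le> c' t"
    using C(3) T1 unfolding c'_def by force
  define H where "H \<equiv> \<lambda>x. ennreal (indicator {T<..} x *\<^sub>R c x * exp (-x)) * indicator {T1<..} x"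
  have Hm[measurable]: "H \<in> borel_measurable borel" unfolding H_def by measurable
  have Hfin: "integral\<^sup>N lborel H < \<infinity>"
  proof -
    have "H = (\<lambda>x. ennreal (c x * exp (-x)) * indicator {T1<..} x)"
      using T1 unfolding H_def by (auto simp: indicator_def fun_eq_iff)
    thus ?thesis using fin1 unfolding ce_int_finite_def by simp
  qed
  define B1 where "B1 \<equiv> \<lambda>x. H (T1/2 + (1/2) * x)"
  have B1m[measurable]: "B1 \<in> borel_measurable borel" unfolding B1_def by measurable
  have B1eq: "B1 x = ennreal (c ((x+T1)/2) * exp (-((x+T1)/2))) * indicator {T1<..} x" for x
  proof -
    have e: "T1/2 + (1/2) * x = (x+T1)/2" by simp
    show ?thesis using T1 unfolding B1_def H_def e by (auto simp: indicator_def)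
  qed
  have B1fin: "integral\<^sup>N lborel B1 < \<infinity>"
  proof -
    have "integral\<^sup>N lborel H = ennreal \<bar>1/2\<bar> * integral\<^sup>N lborel B1"
      unfolding B1_def by (rule nn_integral_real_affine) (use Hm in auto)
    hence "ennreal (1/2) * integral\<^sup>N lborel B1 \<noteq> \<infinity>" using Hfin by simp
    show ?thesis
    proof (rule ccontr)
      assume "\<not> integral\<^sup>N lborel B1 < \<infinity>"
      hence "integral\<^sup>N lborel B1 = \<infinity>" by (simp add: not_less top_unique)
      thus False using \<open>ennreal (1/2) * integral\<^sup>N lborel B1 \<noteq> \<infinity>\<close> by (simp add: ennreal_mult_top)
    qed
  qed
  define P where "P \<equiv> \<lambda>x. ennreal (MM x * exp (-x)) * indicator {T1<..} x"
  have Pm[measurable]: "P \<in> borel_measurable borel" unfolding P_def by measurable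
  have Pfin: "integral\<^sup>N lborel P < \<infinity>"
  proof -
    have "integral\<^sup>N lborel P \<le> (\<integral>\<^sup>+x. B1 x + ennreal K * (ennreal (exp (-(1/2)*x)) * indicator {T1<..} x) \<partial>lborel)"
    proof (intro nn_integral_mono)
      fix x
      show "P x \<le> B1 x + ennreal K * (ennreal (exp (-(1/2)*x)) * indicator {T1<..} x)"
      proof (cases "x > T1")
        case True
        have "MM x * exp (-x) \<le> c ((x+T1)/2) * exp (-((x+T1)/2)) + K * exp (-(1/2)*x)"
          using C(5) True unfolding MM_def K_def by auto
        hence "ennreal (MM x * exp (-x)) \<le> ennreal (c ((x+T1)/2) * exp (-((x+T1)/2)) + K * exp (-(1/2)*x))"
          by (rule ennreal_leI)
        also have "\<dots> = ennreal (c ((x+T1)/2) * exp (-((x+T1)/2))) + ennreal K * ennreal (exp (-(1/2)*x))"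
          using cpos[of "(x+T1)/2"] True T1 Kpos by (simp add: ennreal_plus ennreal_mult)
        finally show ?thesis using True unfolding P_def B1eq by simp
      qed (simp add: P_def)
    qed
    also have "\<dots> = integral\<^sup>N lborel B1 + ennreal K * (\<integral>\<^sup>+x. ennreal (exp (-(1/2)*x)) * indicator {T1<..} x \<partial>lborel)"
    proof -
      have "(\<integral>\<^sup>+x. B1 x + ennreal K * (ennreal (exp (-(1/2)*x)) * indicator {T1<..} x) \<partial>lborel)
         = integral\<^sup>N lborel B1 + (\<integral>\<^sup>+x. ennreal K * (ennreal (exp (-(1/2)*x)) * indicator {T1<..} x) \<partial>lborel)"
        by (rule nn_integral_add) measurable
      also have "(\<integral>\<^sup>+x. ennreal K * (ennreal (exp (-(1/2)*x)) * indicator {T1<..} x) \<partial>lborel)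
         = ennreal K * (\<integral>\<^sup>+x. ennreal (exp (-(1/2)*x)) * indicator {T1<..} x \<partial>lborel)"
        by (rule nn_integral_cmult) measurable
      finally show ?thesis .
    qed
    also have "\<dots> < \<infinity>"
    proof -
      have "ennreal K * (\<integral>\<^sup>+x. ennreal (exp (-(1/2)*x)) * indicator {T1<..} x \<partial>lborel) < \<infinity>"
        using exp_fin[of "1/2" T1] by (simp add: ennreal_mult_less_top)
      thus ?thesis using B1fin by simp
    qed
    finally show ?thesis .
  qed
  define E where "E \<equiv> \<lambda>x. ennreal (exp (-1*x)) * indicator {T<..} x"
  define E1 where "E1 \<equiv> \<lambda>x. ennreal (exp (-1*x)) * indicator {T1<..} x"
  have Em[measurable]: "E \<in> borel_measurable borel" unfolding E_def by measurable
  have E1m[measurable]: "E1 \<in> borel_measurable borel" unfolding E1_def by measurable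
  have Efin: "integral\<^sup>N lborel E < \<infinity>" unfolding E_def by (rule exp_fin) simp
  have E1fin: "integral\<^sup>N lborel E1 < \<infinity>" unfolding E1_def by (rule exp_fin) simp
  have Mpos: "M x > 0" if "x > T1" for x proof - have "0 < G x" using C(2) that T1 by auto thus ?thesis using that unfolding G_def by simp qed
  have fT1': "ce_int_finite T1 c'"
    unfolding ce_int_finite_def
  proof -
    have "(\<integral>\<^sup>+x. ennreal (c' x * exp (-x)) * indicator {T1<..} x \<partial>lborel) \<le> (\<integral>\<^sup>+x. P x + E1 x \<partial>lborel)"
    proof (intro nn_integral_mono)
      fix x
      show "ennreal (c' x * exp (-x)) * indicator {T1<..} x \<le> P x + E1 x"
      proof (cases "x > T1")
        case True
        have "c' x * exp (-x) = MM x * exp (-x) + exp (-1*x)"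
          using True unfolding c'_def G_def MM_def by (simp add: distrib_right)
        hence "ennreal (c' x * exp (-x)) = ennreal (MM x * exp (-x)) + ennreal (exp (-1*x))"
          using Mpos[OF True] True unfolding MM_def by (simp add: ennreal_plus)
        thus ?thesis using True unfolding P_def E1_def by simp
      qed simp
    qed
    also have "\<dots> = integral\<^sup>N lborel P + integral\<^sup>N lborel E1"
      by (rule nn_integral_add) measurable
    also have "\<dots> < \<infinity>" using Pfin E1fin by simp
    finally show "(\<integral>\<^sup>+x\<in>{T1<..}. ennreal (c' x * exp (-x)) \<partial>lborel) < \<infinity>" .
  qed
  have fT': "ce_int_finite T c'" if finT: "ce_int_finite T c"
    unfolding ce_int_finite_def
  proof -
    define Q where "Q \<equiv> \<lambda>x. ennreal (indicator {T<..} x *\<^sub>R c x * exp (-x))"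
    have Qm[measurable]: "Q \<in> borel_measurable borel" unfolding Q_def by measurable
    have "Q = (\<lambda>x. ennreal (c x * exp (-x)) * indicator {T<..} x)"
      unfolding Q_def by (auto simp: indicator_def fun_eq_iff)
    hence Qfin: "integral\<^sup>N lborel Q < \<infinity>" using finT unfolding ce_int_finite_def by simp
    have "(\<integral>\<^sup>+x. ennreal (c' x * exp (-x)) * indicator {T<..} x \<partial>lborel) \<le> (\<integral>\<^sup>+x. Q x + (E x + P x) \<partial>lborel)"
    proof (intro nn_integral_mono)
      fix x
      show "ennreal (c' x * exp (-x)) * indicator {T<..} x \<le> Q x + (E x + P x)"
      proof (cases "x > T1")
        case True
        have "c' x * exp (-x) = MM x * exp (-x) + exp (-1*x)"
          using True unfolding c'_def G_def MM_def by (simp add: distrib_right)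
        hence "ennreal (c' x * exp (-x)) = ennreal (exp (-1*x)) + ennreal (MM x * exp (-x))"
          using Mpos[OF True] True unfolding MM_def by (simp add: ennreal_plus add.commute)
        hence "ennreal (c' x * exp (-x)) * indicator {T<..} x = E x + P x"
          using True T1 unfolding P_def E_def by simp
        thus ?thesis by (simp add: add_increasing)
      next
        case False
        show ?thesis
        proof (cases "x > T")
          case True
          have "c' x * exp (-x) = c x * exp (-x) + exp (-1*x)"
            using False unfolding c'_def G_def by (simp add: distrib_right)
          hence "ennreal (c' x * exp (-x)) = ennreal (c x * exp (-x)) + ennreal (exp (-1*x))"
            using cpos[OF True] by (simp add: ennreal_plus)
          hence "ennreal (c' x * exp (-x)) * indicator {T<..} x = Q x + E x"
            using True unfolding Q_def E_def by simp
          thus ?thesis by (simp add: add.assoc add_increasing2)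
        qed simp
      qed
    qed
    also have "\<dots> = integral\<^sup>N lborel Q + (integral\<^sup>N lborel E + integral\<^sup>N lborel P)"
    proof -
      have "(\<integral>\<^sup>+x. Q x + (E x + P x) \<partial>lborel) = integral\<^sup>N lborel Q + (\<integral>\<^sup>+x. E x + P x \<partial>lborel)"
        by (rule nn_integral_add) measurable
      also have "(\<integral>\<^sup>+x. E x + P x \<partial>lborel) = integral\<^sup>N lborel E + integral\<^sup>N lborel P"
        by (rule nn_integral_add) measurable
      finally show ?thesis .
    qed
    also have "\<dots> < \<infinity>" using Qfin Efin Pfin by simp
    finally show "(\<integral>\<^sup>+x\<in>{T<..}. ennreal (c' x * exp (-x)) \<partial>lborel) < \<infinity>" .
  qed
  have dec': "ce_decr T c'"
    unfolding ce_decr_def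
  proof (intro allI impI)
    fix s t assume st: "T < s \<and> s \<le> t"
    show "c' t * exp (- t) \<le> c' s * exp (- s)"
    proof (cases "s = t")
      case False
      hence "s < t" using st by auto
      thus ?thesis using sd' st unfolding ce_strict_decr_def by (auto intro: less_imp_le)
    qed simp
  qed
  have PT': "in_PT Analytic psi phi T c'" if PT: "in_PT Analytic psi phi T c" for Analytic :: "'a::topological_space set set" and psi phi
  proof -
    from PT[unfolded in_PT_def, THEN conjunct2, THEN conjunct2] obtain E Z where
      EZ: "closed E" "Z \<in> Analytic" "E \<subseteq> {z \<in> Z. psi z = - \<infinity>}"
      and K0: "\<forall>K. compact K \<and> K \<subseteq> UNIV - E \<longrightarrow>
           (\<exists>b>0. \<forall>z\<in>K. ereal T < - psi z \<and> - psi z < \<infinity> \<longrightarrow>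
                b \<le> exp (- phi z) * c (real_of_ereal (- psi z)))"
      by (elim exE conjE)
    note K = K0[rule_format]
    have "\<exists>b>0. \<forall>z\<in>K. ereal T < - psi z \<and> - psi z < \<infinity> \<longrightarrow>
                b \<le> exp (- phi z) * c' (real_of_ereal (- psi z))" if KK: "compact K \<and> K \<subseteq> UNIV - E" for K
    proof -
      obtain b where b: "b > 0" "\<forall>z\<in>K. ereal T < - psi z \<and> - psi z < \<infinity> \<longrightarrow>
                b \<le> exp (- phi z) * c (real_of_ereal (- psi z))" using K[OF KK] by blast
      show ?thesis
      proof (intro exI[of _ b] conjI ballI impI)
        fix z assume z: "z \<in> K" "ereal T < - psi z \<and> - psi z < \<infinity>"
        have r: "T < real_of_ereal (- psi z)" using z(2) by (cases "- psi z") auto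
        have "b \<le> exp (- phi z) * c (real_of_ereal (- psi z))" using b z by blast
        also have "\<dots> \<le> exp (- phi z) * c' (real_of_ereal (- psi z))"
          using cc' r by (intro mult_left_mono) auto
        finally show "b \<le> exp (- phi z) * c' (real_of_ereal (- psi z))" .
      qed (use b in auto)
    qed
    hence "\<forall>K. compact K \<and> K \<subseteq> UNIV - E \<longrightarrow> (\<exists>b>0. \<forall>z\<in>K. ereal T < - psi z \<and> - psi z < \<infinity> \<longrightarrow>
                b \<le> exp (- phi z) * c' (real_of_ereal (- psi z)))" by blast
    thus ?thesis unfolding in_PT_def using pos' dec' EZ
      by (intro conjI exI[of _ E] exI[of _ Z])
  qed
  show ?thesis
  proof (intro conjI allI impI)
    show "\<exists>c'. pos_meas_on T c' \<and> (\<forall>t>T. c t \<le> c' t) \<and> ce_strict_decr T c' \<and>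
            (\<exists>a>T. \<forall>s t. a < s \<and> s \<le> t \<longrightarrow> c' s \<le> c' t) \<and> ce_int_finite T1 c'"
      using pos' cc' sd' inc' fT1' by (intro exI[of _ c'] conjI)
  next
    fix Analytic :: "'a::topological_space set set" and psi phi
    assume h: "ereal T = - (SUP z. psi z) \<and> ce_int_finite T c \<and> in_PT Analytic psi phi T c"
    show "\<exists>c'. pos_meas_on T c' \<and> (\<forall>t>T. c t \<le> c' t) \<and> ce_strict_decr T c' \<and>
              (\<exists>a>T. \<forall>s t. a < s \<and> s \<le> t \<longrightarrow> c' s \<le> c' t) \<and> ce_int_finite T1 c' \<and>
              ce_int_finite T c' \<and> in_PT Analytic psi phi T c'"
      using pos' cc' sd' inc' fT1' fT' PT'[of Analytic psi phi] h by (intro exI[of _ c'] conjI) auto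
  qed
qed
end
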